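(* Let $\mathbb{R}^d=V\oplus W$ with $\dim V=\ell$ and $\dim W=d-\ell$. Let $K\subseteq V$ and $L\subseteq W$ be convex bodies (in $V$ and $W$ respectively) that contain the origin, and let $\Lambda\subseteq V$ and $\Gamma\subseteq W$ be lattices. Then for every $i\in\{1,\dots,d\}$, $$\mu_i(K\oplus L,\Lambda\oplus\Gamma)=\max_{\substack{0\le j\le \ell\\ 0\le i-j\le d-\ell}}\Big(\mu_j(K,\Lambda)+\mu_{i-j}(L,\Gamma)\Big).$$
   Context: A convex body in a real vector space is a full-dimensional compact convex subset; a lattice is a full-rank discrete subgroup. The direct sum of $K\subseteq V$ and $L\subseteq W$ (both containing the origin) is $K\oplus L=\{\lambda x+(1-\lambda)y: x\in K,\ y\in L,\ \lambda\in[0,1]\}\subseteq\mathbb{R}^d$, and $\Lambda\oplus\Gamma=\{a+b: a\in\Lambda,\ b\in\Gamma\}$. For a $k$-dimensional real vector space $E$, a lattice $\Gamma'\subseteq E$, a convex body $C\subseteq E$ and $i\in\{1,\dots,k\}$, the $i$-th covering minimum is $\mu_i(C,\Gamma')=\min\{\mu\ge 0: (\mu C+\Gamma')\cap U\neq\emptyset$ for every affine subspace $U\subseteq E$ of dimension $k-i\}$; by convention $\mu_0(C,\Gamma')=0$. Covering minima of $K,\Lambda$ are taken in $V$, those of $L,\Gamma$ in $W$. *)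

theory Defs
  imports "HOL-Analysis.Analysis"
begin

definition convex_body_in :: "'a::euclidean_space set \<Rightarrow> 'a set \<Rightarrow> bool" where
  "convex_body_in E C \<longleftrightarrow> C \<subseteq> E \<and> compact C \<and> convex C \<and> aff_dim C = int (dim E)"

definition lattice_in :: "'a::euclidean_space set \<Rightarrow> 'a set \<Rightarrow> bool" where
  "lattice_in E G \<longleftrightarrow> G \<subseteq> E \<and> 0 \<in> G \<and> (\<forall>x\<in>G. \<forall>y\<in>G. x + y \<in> G) \<and> (\<forall>x\<in>G. - x \<in> G)
     \<and> (\<exists>e>0. \<forall>x\<in>G. x \<noteq> 0 \<longrightarrow> e \<le> norm x) \<and> span G = E"

definition dil_plus :: "real \<Rightarrow> 'a::euclidean_space set \<Rightarrow> 'a set \<Rightarrow> 'a set" where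
  "dil_plus \<mu> C G = {\<mu> *\<^sub>R c + g | c g. c \<in> C \<and> g \<in> G}"

definition covering_minimum :: "'a::euclidean_space set \<Rightarrow> 'a set \<Rightarrow> 'a set \<Rightarrow> nat \<Rightarrow> real" where
  "covering_minimum E C G i = (if i = 0 then 0 else
     Inf {\<mu>. \<mu> \<ge> 0 \<and> (\<forall>U. U \<subseteq> E \<and> affine U \<and> U \<noteq> {} \<and> aff_dim U = int (dim E) - int i
            \<longrightarrow> dil_plus \<mu> C G \<inter> U \<noteq> {})})"

definition direct_sum_set :: "'a::euclidean_space set \<Rightarrow> 'a set \<Rightarrow> 'a set" where
  "direct_sum_set K L = {t *\<^sub>R x + (1 - t) *\<^sub>R y | t x y. x \<in> K \<and> y \<in> L \<and> 0 \<le> t \<and> t \<le> 1}"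

definition lattice_sum :: "'a::euclidean_space set \<Rightarrow> 'a set \<Rightarrow> 'a set" where
  "lattice_sum A B = {a + b | a b. a \<in> A \<and> b \<in> B}"

end

theory Submission
  imports Defs
begin


definition covers :: "'a::euclidean_space set \<Rightarrow> 'a set \<Rightarrow> 'a set \<Rightarrow> nat \<Rightarrow> real \<Rightarrow> bool" where
  "covers E C G k \<mu> \<longleftrightarrow> (\<forall>U. U \<subseteq> E \<and> affine U \<and> U \<noteq> {} \<and> aff_dim U = int (dim E) - int k
            \<longrightarrow> dil_plus \<mu> C G \<inter> U \<noteq> {})"

lemma cm_def2: "k \<noteq> 0 \<Longrightarrow> covering_minimum E C G k = Inf {\<mu>. \<mu> \<ge> 0 \<and> covers E C G k \<mu>}"
  unfolding covering_minimum_def covers_def by simp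

lemma affine_full:
  fixes U E :: "'a::euclidean_space set"
  assumes "subspace E" "affine U" "U \<subseteq> E" "U \<noteq> {}" "aff_dim U = int (dim E)"
  shows "U = E"
proof -
  obtain p where p: "p \<in> U" using assms by auto
  define S where "S = (\<lambda>x. (-p) + x) ` U"
  have sS: "subspace S" unfolding S_def by (rule affine_diffs_subspace[OF assms(2) p])
  have pE: "p \<in> E" using p assms by auto
  have SE: "S \<subseteq> E" unfolding S_def using assms(1,3) pE by (auto intro: subspace_diff)
  have "aff_dim S = aff_dim U" unfolding S_def by (rule aff_dim_translation_eq)
  then have "dim S = dim E" using aff_dim_subspace[OF sS] assms(5) by simp
  then have "S = E" using subspace_dim_equal[OF sS assms(1) SE] by simp
  have "U = (\<lambda>x. p + x) ` S" unfolding S_def by (auto simp: image_iff) 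
  also have "\<dots> = E" using \<open>S = E\<close> pE assms(1)
    apply auto
     apply (simp add: subspace_add)
    by (metis add_diff_cancel_left' diff_add_cancel image_eqI subspace_diff)
  finally show ?thesis .
qed

lemma star:
  assumes "convex C" "0 \<in> C" "x \<in> C" "0 \<le> t" "t \<le> 1"
  shows "t *\<^sub>R x \<in> C"
  using convexD[OF assms(1) assms(3) assms(2), of t "1 - t"] assms by simp

lemma dil_mono:
  assumes "convex C" "0 \<in> C" "0 \<le> \<mu>'" "\<mu>' \<le> \<mu>"
  shows "dil_plus \<mu>' C G \<subseteq> dil_plus \<mu> C G"
proof
  fix z assume "z \<in> dil_plus \<mu>' C G"
  then obtain c g where z: "z = \<mu>' *\<^sub>R c + g" "c \<in> C" "g \<in> G" unfolding dil_plus_def by auto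
  show "z \<in> dil_plus \<mu> C G"
  proof (cases "\<mu> = 0")
    case True
    then have "\<mu>' = 0" using assms by simp
    then show ?thesis using z True unfolding dil_plus_def by auto
  next
    case False
    then have "\<mu> > 0" using assms by simp
    have "(\<mu>'/\<mu>) *\<^sub>R c \<in> C" using star[OF assms(1,2) z(2)] assms \<open>\<mu> > 0\<close> by simp
    moreover have "z = \<mu> *\<^sub>R ((\<mu>'/\<mu>) *\<^sub>R c) + g" using z \<open>\<mu> > 0\<close> by simp
    ultimately show ?thesis using z unfolding dil_plus_def by blast
  qed
qed

lemma lat_nat_mult:
  assumes "lattice_in E G" "g \<in> G"
  shows "of_nat n *\<^sub>R g \<in> G"
proof (induction n)
  case 0 then show ?case using assms unfolding lattice_in_def by simp
next
  case (Suc n)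
  have "of_nat (Suc n) *\<^sub>R g = of_nat n *\<^sub>R g + g" by (simp add: algebra_simps)
  then show ?case using Suc assms unfolding lattice_in_def by metis
qed

lemma lat_int_mult:
  assumes "lattice_in E G" "g \<in> G"
  shows "of_int k *\<^sub>R g \<in> G"
proof (cases "k \<ge> 0")
  case True
  then have "of_int k = (of_nat (nat k) :: real)" by simp
  then show ?thesis using lat_nat_mult[OF assms] by metis
next
  case False
  then have "of_int k *\<^sub>R g = - (of_nat (nat (-k)) *\<^sub>R g)" by simp
  then show ?thesis using lat_nat_mult[OF assms, of "nat (-k)"] assms unfolding lattice_in_def by metis
qed

lemma lat_sum:
  assumes "lattice_in E G" "finite B" "\<And>b. b \<in> B \<Longrightarrow> h b \<in> G"
  shows "sum h B \<in> G"
  using assms(2,3)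
proof (induction B rule: finite_induct)
  case empty then show ?case using assms(1) unfolding lattice_in_def by simp
next
  case (insert x F)
  then show ?case using assms(1) unfolding lattice_in_def by simp
qed



lemma bigmu:
  fixes E C G :: "'a::euclidean_space set"
  assumes sE: "subspace E" and cb: "convex_body_in E C" and lat: "lattice_in E G"
  shows "\<exists>\<mu>\<ge>0. E \<subseteq> dil_plus \<mu> C G"
proof -
  have CE: "C \<subseteq> E" and cvx: "convex C" and ad: "aff_dim C = int (dim E)"
    using cb unfolding convex_body_in_def by auto
  have Cne: "C \<noteq> {}" using ad by auto
  have "affine hull C = E"
  proof (rule affine_full[OF sE])
    show "affine (affine hull C)" by simp
    show "affine hull C \<subseteq> E" using CE sE by (simp add: hull_minimal subspace_imp_affine)
    show "affine hull C \<noteq> {}" using Cne by simp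
    show "aff_dim (affine hull C) = int (dim E)" using ad by simp
  qed
  obtain p where "p \<in> rel_interior C" using rel_interior_eq_empty[OF cvx] Cne by auto
  then obtain e where pC: "p \<in> C" and e: "e > 0" and ball: "ball p e \<inter> E \<subseteq> C"
    using mem_rel_interior_ball \<open>affine hull C = E\<close> by metis
  have pE: "p \<in> E" using pC CE by auto
  have GE: "G \<subseteq> E" and spG: "span G = E" using lat unfolding lattice_in_def by auto
  obtain B where BG: "B \<subseteq> G" and indB: "independent B" and GB: "G \<subseteq> span B"
    by (rule maximal_independent_subset)
  have finB: "finite B" using indB by (rule finiteI_independent)
  have EB: "E \<subseteq> span B" using spG GB by (metis span_minimal subspace_span)
  define R where "R = (\<Sum>b\<in>B. norm b)"
  have R0: "R \<ge> 0" unfolding R_def by (simp add: sum_nonneg)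
  define \<mu> where "\<mu> = R / e + 1"
  have mu0: "\<mu> > 0" unfolding \<mu>_def using R0 e by (simp add: add_nonneg_pos)
  have Rmu: "R / \<mu> < e"
  proof -
    have "R < e * \<mu>" unfolding \<mu>_def using e R0 by (simp add: algebra_simps)
    then show ?thesis using mu0 by (simp add: divide_less_eq mult.commute)
  qed
  have "E \<subseteq> dil_plus \<mu> C G"
  proof
    fix z assume zE: "z \<in> E"
    have "z - \<mu> *\<^sub>R p \<in> E" using zE pE sE by (simp add: subspace_diff subspace_scale)
    then have "z - \<mu> *\<^sub>R p \<in> span B" using EB by auto
    then obtain u where u: "z - \<mu> *\<^sub>R p = (\<Sum>b\<in>B. u b *\<^sub>R b)"
      using span_finite[OF finB] by auto
    define g where "g = (\<Sum>b\<in>B. of_int (floor (u b)) *\<^sub>R b)"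
    define r where "r = (\<Sum>b\<in>B. (u b - of_int (floor (u b))) *\<^sub>R b)"
    have gG: "g \<in> G" unfolding g_def
      by (rule lat_sum[OF lat finB]) (use BG lat_int_mult[OF lat] in auto)
    have zr: "z - \<mu> *\<^sub>R p = g + r" unfolding u g_def r_def
      by (simp add: sum.distrib[symmetric] scaleR_left_diff_distrib)
    have nr: "norm r \<le> R"
    proof -
      have "norm r \<le> (\<Sum>b\<in>B. norm ((u b - of_int (floor (u b))) *\<^sub>R b))"
        unfolding r_def by (rule norm_sum)
      also have "\<dots> \<le> (\<Sum>b\<in>B. norm b)"
      proof (rule sum_mono)
        fix b
        have "\<bar>u b - of_int (floor (u b))\<bar> \<le> 1" by linarith
        then show "norm ((u b - of_int (floor (u b))) *\<^sub>R b) \<le> norm b"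
          by (simp add: mult_left_le_one_le)
      qed
      finally show ?thesis unfolding R_def .
    qed
    have rE: "r \<in> E"
    proof -
      have "r = (z - \<mu> *\<^sub>R p) - g" using zr by simp
      then show ?thesis using \<open>z - \<mu> *\<^sub>R p \<in> E\<close> gG GE sE by (metis subsetD subspace_diff)
    qed
    define c where "c = p + (1/\<mu>) *\<^sub>R r"
    have "c \<in> E" unfolding c_def using pE rE sE by (simp add: subspace_add subspace_scale)
    moreover have "dist p c < e"
    proof -
      have "dist p c = norm r / \<mu>" unfolding c_def dist_norm using mu0 by simp
      also have "\<dots> \<le> R / \<mu>" using nr mu0 by (simp add: divide_right_mono)
      finally show ?thesis using Rmu by simp
    qed
    ultimately have "c \<in> C" using ball by auto
    moreover have "z = \<mu> *\<^sub>R c + g" unfolding c_def using zr mu0 by (simp add: algebra_simps)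
    ultimately show "z \<in> dil_plus \<mu> C G" using gG unfolding dil_plus_def by blast
  qed
  then show ?thesis using mu0 by (intro exI[of _ \<mu>]) auto
qed

lemma covers_big:
  fixes E C G :: "'a::euclidean_space set"
  assumes "subspace E" "convex_body_in E C" "lattice_in E G"
  shows "\<exists>\<mu>\<ge>0. covers E C G k \<mu>"
proof -
  obtain \<mu> where "\<mu> \<ge> 0" "E \<subseteq> dil_plus \<mu> C G" using bigmu[OF assms] by auto
  then show ?thesis unfolding covers_def by blast
qed

lemma cm_facts:
  fixes E C G :: "'a::euclidean_space set"
  assumes "subspace E" "convex_body_in E C" "lattice_in E G" "k \<noteq> 0"
  shows "covering_minimum E C G k \<ge> 0"
    and "\<And>\<epsilon>. \<epsilon> > 0 \<Longrightarrow> \<exists>\<mu>. \<mu> \<ge> 0 \<and> covers E C G k \<mu> \<and> \<mu> < covering_minimum E C G k + \<epsilon>"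
proof -
  let ?S = "{\<mu>. \<mu> \<ge> 0 \<and> covers E C G k \<mu>}"
  have ne: "?S \<noteq> {}" using covers_big[OF assms(1-3), of k] by auto
  have bdd: "bdd_below ?S" by (rule bdd_belowI[of _ 0]) auto
  show "covering_minimum E C G k \<ge> 0"
    unfolding cm_def2[OF assms(4)] by (rule cInf_greatest[OF ne]) auto
  fix \<epsilon> :: real assume "\<epsilon> > 0"
  then have "Inf ?S < Inf ?S + \<epsilon>" by simp
  then obtain \<mu> where "\<mu> \<in> ?S" "\<mu> < Inf ?S + \<epsilon>" using cInf_less_iff[OF ne bdd] by blast
  then show "\<exists>\<mu>. \<mu> \<ge> 0 \<and> covers E C G k \<mu> \<and> \<mu> < covering_minimum E C G k + \<epsilon>"
    unfolding cm_def2[OF assms(4)] by blast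
qed

lemma cm_nonneg:
  fixes E C G :: "'a::euclidean_space set"
  assumes "subspace E" "convex_body_in E C" "lattice_in E G"
  shows "covering_minimum E C G k \<ge> 0"
  using cm_facts(1)[OF assms] by (cases "k = 0") (auto simp: covering_minimum_def)

lemma meet_lemma:
  fixes E C G :: "'a::euclidean_space set"
  assumes "subspace E" "convex_body_in E C" "lattice_in E G" "0 \<in> C" "\<epsilon> > 0"
  shows "\<exists>\<mu>. 0 \<le> \<mu> \<and> \<mu> \<le> covering_minimum E C G k + \<epsilon> \<and> covers E C G k \<mu>"
proof (cases "k = 0")
  case True
  have "covers E C G k 0"
    unfolding covers_def
  proof (intro allI impI)
    fix U assume U: "U \<subseteq> E \<and> affine U \<and> U \<noteq> {} \<and> aff_dim U = int (dim E) - int k"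
    then have "U = E" using affine_full[OF assms(1)] True by auto
    moreover have "0 \<in> E" using assms(1) by (simp add: subspace_0)
    moreover have "0 \<in> dil_plus 0 C G" using assms(3,4) unfolding dil_plus_def lattice_in_def by force
    ultimately show "dil_plus 0 C G \<inter> U \<noteq> {}" by auto
  qed
  then show ?thesis using True assms(5) by (auto simp: covering_minimum_def)
next
  case False
  then show ?thesis using cm_facts(2)[OF assms(1-3) False assms(5)] by force
qed

lemma avoid_lemma:
  fixes E C G :: "'a::euclidean_space set"
  assumes sE: "subspace E" and cvx: "convex C" and C0: "0 \<in> C" and kE: "k \<le> dim E"
    and mu1: "\<mu>1 < covering_minimum E C G k"
  shows "\<exists>U. U \<subseteq> E \<and> affine U \<and> U \<noteq> {} \<and> aff_dim U = int (dim E) - int k \<and>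
           (\<forall>\<mu>'. 0 \<le> \<mu>' \<and> \<mu>' \<le> \<mu>1 \<longrightarrow> dil_plus \<mu>' C G \<inter> U = {})"
proof (cases "\<mu>1 < 0")
  case True
  obtain T where T: "subspace T" "T \<subseteq> span E" "dim T = dim E - k"
    using choose_subspace_of_subspace[of "dim E - k" E] by auto
  have "T \<subseteq> E" using T(2) sE by (metis span_eq_iff)
  moreover have "affine T" using T(1) by (simp add: subspace_imp_affine)
  moreover have "T \<noteq> {}" using T(1) subspace_0 by auto
  moreover have "aff_dim T = int (dim E) - int k" using aff_dim_subspace[OF T(1)] T(3) kE by simp
  ultimately show ?thesis using True by (intro exI[of _ T]) auto
next
  case False
  then have k0: "k \<noteq> 0" using mu1 by (auto simp: covering_minimum_def split: if_splits)
  let ?S = "{\<mu>. \<mu> \<ge> 0 \<and> covers E C G k \<mu>}"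
  have bdd: "bdd_below ?S" by (rule bdd_belowI[of _ 0]) auto
  have "\<not> covers E C G k \<mu>1"
  proof
    assume "covers E C G k \<mu>1"
    then have "\<mu>1 \<in> ?S" using False by simp
    then have "Inf ?S \<le> \<mu>1" using cInf_lower[OF _ bdd] by blast
    then show False using mu1 unfolding cm_def2[OF k0] by simp
  qed
  then obtain U where U: "U \<subseteq> E" "affine U" "U \<noteq> {}" "aff_dim U = int (dim E) - int k"
    and dis: "dil_plus \<mu>1 C G \<inter> U = {}" unfolding covers_def by blast
  have "\<forall>\<mu>'. 0 \<le> \<mu>' \<and> \<mu>' \<le> \<mu>1 \<longrightarrow> dil_plus \<mu>' C G \<inter> U = {}"
    using dil_mono[OF cvx C0] dis by blast
  then show ?thesis using U by blast
qed



lemma comb_point: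
  fixes K L :: "'a::euclidean_space set"
  assumes "convex K" "convex L" "0 \<in> K" "0 \<in> L" "x \<in> K" "y \<in> L"
    "\<mu>1 \<ge> 0" "\<mu>2 \<ge> 0" "\<mu>1 + \<mu>2 \<le> \<mu>" "\<mu> > 0"
  shows "\<exists>c\<in>direct_sum_set K L. \<mu>1 *\<^sub>R x + \<mu>2 *\<^sub>R y = \<mu> *\<^sub>R c"
proof (cases "\<mu>1 + \<mu>2 = 0")
  case True
  then have "\<mu>1 = 0" "\<mu>2 = 0" using assms by auto
  moreover have "(0::'a) \<in> direct_sum_set K L" unfolding direct_sum_set_def
    using assms(3,4) by (intro CollectI exI[of _ 1] exI[of _ 0]) auto
  ultimately show ?thesis by auto
next
  case False
  define s where "s = \<mu>1 + \<mu>2"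
  have s0: "s > 0" using False assms unfolding s_def by simp
  define lam where "lam = s / \<mu>"
  define t where "t = \<mu>1 / s"
  have lam01: "0 \<le> lam" "lam \<le> 1" unfolding lam_def s_def using assms by auto
  have t01: "0 \<le> t" "t \<le> 1" unfolding t_def s_def using assms s0 s_def by auto
  have xK: "lam *\<^sub>R x \<in> K" using star[OF assms(1,3,5) lam01] .
  have yL: "lam *\<^sub>R y \<in> L" using star[OF assms(2,4,6) lam01] .
  define c where "c = t *\<^sub>R (lam *\<^sub>R x) + (1 - t) *\<^sub>R (lam *\<^sub>R y)"
  have "c \<in> direct_sum_set K L" unfolding direct_sum_set_def c_def using xK yL t01 by blast
  moreover have "\<mu> *\<^sub>R c = \<mu>1 *\<^sub>R x + \<mu>2 *\<^sub>R y"
  proof -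
    have "\<mu> * lam = s" unfolding lam_def using assms by simp
    moreover have "s * t = \<mu>1" "s * (1 - t) = \<mu>2" unfolding t_def using s0 by (auto simp: field_simps s_def)
    ultimately show ?thesis unfolding c_def
      by (simp add: scaleR_add_right mult.assoc[symmetric]) (metis mult.assoc mult.commute)
  qed
  ultimately show ?thesis by metis
qed



lemma ub_lemma:
  fixes V W K L \<Lambda> \<Gamma> U :: "'a::euclidean_space set" and l i :: nat
  assumes sV: "subspace V" and sW: "subspace W"
    and VW: "V \<inter> W = {0}" and sum: "{v + w | v w. v \<in> V \<and> w \<in> W} = UNIV"
    and dV: "dim V = l" and dW: "dim W = DIM('a) - l"
    and cK: "convex_body_in V K" and K0: "0 \<in> K"
    and cL: "convex_body_in W L" and L0: "0 \<in> L"
    and lV: "lattice_in V \<Lambda>" and lW: "lattice_in W \<Gamma>"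
    and i1: "1 \<le> i" and id: "i \<le> DIM('a)"
    and eps: "\<epsilon> > 0"
    and aU: "affine U" and neU: "U \<noteq> {}" and adU: "aff_dim U = int DIM('a) - int i"
  shows "\<exists>j. j \<le> l \<and> j \<le> i \<and> i - j \<le> DIM('a) - l \<and>
     (\<forall>\<mu>. \<mu> \<ge> covering_minimum V K \<Lambda> j + covering_minimum W L \<Gamma> (i - j) + 2 * \<epsilon> \<longrightarrow>
        dil_plus \<mu> (direct_sum_set K L) (lattice_sum \<Lambda> \<Gamma>) \<inter> U \<noteq> {})"
proof -
  have KV: "K \<subseteq> V" and cvK: "convex K" using cK unfolding convex_body_in_def by auto
  have LW: "L \<subseteq> W" and cvL: "convex L" using cL unfolding convex_body_in_def by auto
  have decomp: "\<exists>v w. v \<in> V \<and> w \<in> W \<and> x = v + w" for x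
  proof -
    have "x \<in> {v + w | v w. v \<in> V \<and> w \<in> W}" unfolding sum by (rule UNIV_I)
    then show ?thesis by blast
  qed
  obtain u0 where u0: "u0 \<in> U" using neU by auto
  define U0 where "U0 = (\<lambda>x. (-u0) + x) ` U"
  have sU0: "subspace U0" unfolding U0_def by (rule affine_diffs_subspace[OF aU u0])
  have "aff_dim U0 = aff_dim U" unfolding U0_def by (rule aff_dim_translation_eq)
  then have dU0: "dim U0 = DIM('a) - i" using aff_dim_subspace[OF sU0] adU id by simp
  have memU: "x \<in> U \<longleftrightarrow> x - u0 \<in> U0" for x
  proof
    assume "x \<in> U" then show "x - u0 \<in> U0" unfolding U0_def by force
  next
    assume "x - u0 \<in> U0"
    then obtain y where "y \<in> U" "x - u0 = -u0 + y" unfolding U0_def by auto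
    then show "x \<in> U" by (metis add_left_cancel diff_conv_add_uminus add.commute)
  qed
  define T where "T = U0 \<inter> V"
  have sT: "subspace T" unfolding T_def using sU0 sV by (rule subspace_inter)
  define m where "m = dim T"
  define P0 where "P0 = {w. w \<in> W \<and> (\<exists>v\<in>V. v + w \<in> U0)}"
  have sP0: "subspace P0" unfolding subspace_def
  proof (intro conjI ballI allI)
    show "0 \<in> P0" unfolding P0_def using sV sW sU0 by (auto simp: subspace_0 intro!: bexI[of _ 0])
  next
    fix x y assume "x \<in> P0" "y \<in> P0"
    then obtain v1 v2 where "x \<in> W" "y \<in> W" "v1 \<in> V" "v2 \<in> V" "v1 + x \<in> U0" "v2 + y \<in> U0"
      unfolding P0_def by auto
    moreover have "(v1 + v2) + (x + y) = (v1 + x) + (v2 + y)" by (simp add: algebra_simps)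
    moreover have "v1 + v2 \<in> V" "x + y \<in> W" "(v1 + x) + (v2 + y) \<in> U0"
      using calculation sV sW sU0 by (auto intro: subspace_add)
    ultimately show "x + y \<in> P0" unfolding P0_def by (metis (mono_tags, lifting) mem_Collect_eq)
  next
    fix c :: real and x assume "x \<in> P0"
    then obtain v1 where "x \<in> W" "v1 \<in> V" "v1 + x \<in> U0" unfolding P0_def by auto
    moreover have "c *\<^sub>R v1 + c *\<^sub>R x = c *\<^sub>R (v1 + x)" by (simp add: algebra_simps)
    moreover have "c *\<^sub>R v1 \<in> V" "c *\<^sub>R x \<in> W" "c *\<^sub>R (v1 + x) \<in> U0"
      using calculation sV sW sU0 by (auto intro: subspace_scale)
    ultimately show "c *\<^sub>R x \<in> P0" unfolding P0_def by (metis (mono_tags, lifting) mem_Collect_eq)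
  qed
  have P0W: "P0 \<subseteq> W" unfolding P0_def by auto
  have eqsum: "{x + y | x y. x \<in> U0 \<and> y \<in> V} = {x + y | x y. x \<in> V \<and> y \<in> P0}"
  proof (intro set_eqI iffI)
    fix z assume "z \<in> {x + y | x y. x \<in> U0 \<and> y \<in> V}"
    then obtain x y where xy: "z = x + y" "x \<in> U0" "y \<in> V" by auto
    obtain v w where vw: "v \<in> V" "w \<in> W" "x = v + w" using decomp by blast
    have "w \<in> P0" unfolding P0_def using vw xy by auto
    moreover have "z = (v + y) + w" using xy vw by (simp add: algebra_simps)
    moreover have "v + y \<in> V" using vw xy sV by (simp add: subspace_add)
    ultimately show "z \<in> {x + y | x y. x \<in> V \<and> y \<in> P0}" by blast
  next
    fix z assume "z \<in> {x + y | x y. x \<in> V \<and> y \<in> P0}"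
    then obtain x y where xy: "z = x + y" "x \<in> V" "y \<in> P0" by auto
    then obtain v where v: "v \<in> V" "v + y \<in> U0" unfolding P0_def by auto
    have "z = (v + y) + (x - v)" using xy by (simp add: algebra_simps)
    moreover have "x - v \<in> V" using xy v sV by (simp add: subspace_diff)
    ultimately show "z \<in> {x + y | x y. x \<in> U0 \<and> y \<in> V}" using v by blast
  qed
  have d1: "dim {x + y | x y. x \<in> U0 \<and> y \<in> V} + m = dim U0 + dim V"
    using dim_sums_Int[OF sU0 sV] unfolding m_def T_def .
  have "V \<inter> P0 \<subseteq> {0}" using VW P0W by auto
  then have h0: "dim (V \<inter> P0) = 0" by simp
  have d2: "dim {x + y | x y. x \<in> V \<and> y \<in> P0} = dim V + dim P0"
    using dim_sums_Int[OF sV sP0] h0 by linarith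
  have dP0: "dim P0 + m = DIM('a) - i" using d1 d2 eqsum dU0 by simp
  have ml: "m \<le> l" unfolding m_def T_def using dim_subset[of "U0 \<inter> V" V] dV by auto
  have Pl: "dim P0 \<le> DIM('a) - l" using dim_subset[OF P0W] dW by simp
  have lD: "l \<le> DIM('a)" using dim_subset[of V UNIV] dV by simp
  define j where "j = l - m"
  define k where "k = i - j"
  have jl: "j \<le> l" and ji: "j \<le> i" and kl: "k \<le> DIM('a) - l" and dP0k: "dim P0 = (DIM('a) - l) - k"
    and mj: "m = l - j"
  proof -
    have a: "dim P0 + m + i = DIM('a)" using dP0 id Pl by linarith
    show "j \<le> l" unfolding j_def by simp
    show "j \<le> i" unfolding j_def using a Pl lD by linarith
    show "k \<le> DIM('a) - l" unfolding k_def j_def using a Pl lD ml by linarith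
    show "dim P0 = (DIM('a) - l) - k" unfolding k_def j_def using a Pl lD ml by linarith
    show "m = l - j" unfolding j_def using ml by linarith
  qed
  obtain v0 w0 where v0: "v0 \<in> V" and w0: "w0 \<in> W" and u0d: "u0 = v0 + w0" using decomp by blast
  define P where "P = (\<lambda>x. w0 + x) ` P0"
  have PW: "P \<subseteq> W" unfolding P_def using P0W w0 sW by (auto intro: subspace_add)
  have aP: "affine P" unfolding P_def using sP0 by (metis affine_translation subspace_imp_affine)
  have neP: "P \<noteq> {}" unfolding P_def using sP0 subspace_0 by auto
  have adP: "aff_dim P = int (dim W) - int k"
    unfolding P_def aff_dim_translation_eq aff_dim_subspace[OF sP0] using dP0k dW kl by simp
  obtain \<mu>2 where mu2: "0 \<le> \<mu>2" "\<mu>2 \<le> covering_minimum W L \<Gamma> k + \<epsilon>" "covers W L \<Gamma> k \<mu>2"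
    using meet_lemma[OF sW cL lW L0 eps] by blast
  then obtain z where "z \<in> dil_plus \<mu>2 L \<Gamma>" "z \<in> P"
    unfolding covers_def using PW aP neP adP by blast
  then obtain y b p0 where yb: "z = \<mu>2 *\<^sub>R y + b" "y \<in> L" "b \<in> \<Gamma>" and p0: "p0 \<in> P0" "z = w0 + p0"
    unfolding dil_plus_def P_def by auto
  then obtain v where v: "v \<in> V" "v + p0 \<in> U0" unfolding P0_def by auto
  define u where "u = u0 + (v + p0)"
  have uU: "u \<in> U" using memU[of u] v unfolding u_def by simp
  define v' where "v' = v0 + v"
  have v'V: "v' \<in> V" unfolding v'_def using v0 v sV by (simp add: subspace_add)
  have uv'z: "u = v' + z" unfolding u_def v'_def using u0d p0 by (simp add: algebra_simps)
  define F where "F = (\<lambda>x. v' + x) ` T"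
  have FV: "F \<subseteq> V" unfolding F_def T_def using v'V sV by (auto intro: subspace_add)
  have aF: "affine F" unfolding F_def using sT by (metis affine_translation subspace_imp_affine)
  have neF: "F \<noteq> {}" unfolding F_def using sT subspace_0 by auto
  have adF: "aff_dim F = int (dim V) - int j"
    unfolding F_def aff_dim_translation_eq aff_dim_subspace[OF sT] using mj jl dV m_def by simp
  obtain \<mu>1 where mu1: "0 \<le> \<mu>1" "\<mu>1 \<le> covering_minimum V K \<Lambda> j + \<epsilon>" "covers V K \<Lambda> j \<mu>1"
    using meet_lemma[OF sV cK lV K0 eps] by blast
  then obtain q where "q \<in> dil_plus \<mu>1 K \<Lambda>" "q \<in> F"
    unfolding covers_def using FV aF neF adF by blast
  then obtain x a t where xa: "q = \<mu>1 *\<^sub>R x + a" "x \<in> K" "a \<in> \<Lambda>" and t: "t \<in> T" "q = v' + t"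
    unfolding dil_plus_def F_def by auto
  have utU: "u + t \<in> U"
  proof -
    have e: "(u + t) - u0 = (v + p0) + t" unfolding u_def by (simp add: algebra_simps)
    have "t \<in> U0" using t T_def by auto
    then have "(v + p0) + t \<in> U0" using v sU0 by (simp add: subspace_add)
    then have "(u + t) - u0 \<in> U0" using e by metis
    then show ?thesis using memU by simp
  qed
  have ut: "u + t = (\<mu>1 *\<^sub>R x + \<mu>2 *\<^sub>R y) + (a + b)"
    using uv'z yb xa t by (simp add: algebra_simps)
  have abL: "a + b \<in> lattice_sum \<Lambda> \<Gamma>" unfolding lattice_sum_def using xa yb by blast
  have cmV0: "covering_minimum V K \<Lambda> j \<ge> 0" by (rule cm_nonneg[OF sV cK lV])
  have cmW0: "covering_minimum W L \<Gamma> k \<ge> 0" by (rule cm_nonneg[OF sW cL lW])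
  have "\<forall>\<mu>. \<mu> \<ge> covering_minimum V K \<Lambda> j + covering_minimum W L \<Gamma> (i - j) + 2 * \<epsilon> \<longrightarrow>
        dil_plus \<mu> (direct_sum_set K L) (lattice_sum \<Lambda> \<Gamma>) \<inter> U \<noteq> {}"
  proof (intro allI impI)
    fix \<mu> assume hmu: "\<mu> \<ge> covering_minimum V K \<Lambda> j + covering_minimum W L \<Gamma> (i - j) + 2 * \<epsilon>"
    have "\<mu>1 + \<mu>2 \<le> \<mu>" using hmu mu1 mu2 k_def by simp
    moreover have "\<mu> > 0" using hmu cmV0 cmW0 eps k_def by simp
    ultimately obtain c where c: "c \<in> direct_sum_set K L" "\<mu>1 *\<^sub>R x + \<mu>2 *\<^sub>R y = \<mu> *\<^sub>R c"
      using comb_point[OF cvK cvL K0 L0 xa(2) yb(2) mu1(1) mu2(1)] by blast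
    have "u + t \<in> dil_plus \<mu> (direct_sum_set K L) (lattice_sum \<Lambda> \<Gamma>)"
      unfolding dil_plus_def using c abL ut by auto
    then show "dil_plus \<mu> (direct_sum_set K L) (lattice_sum \<Lambda> \<Gamma>) \<inter> U \<noteq> {}" using utU by blast
  qed
  then show ?thesis using jl ji kl k_def by blast
qed



lemma lb_lemma:
  fixes V W K L \<Lambda> \<Gamma> :: "'a::euclidean_space set" and l i j :: nat
  assumes sV: "subspace V" and sW: "subspace W"
    and VW: "V \<inter> W = {0}"
    and dV: "dim V = l" and dW: "dim W = DIM('a) - l"
    and cK: "convex_body_in V K" and K0: "0 \<in> K"
    and cL: "convex_body_in W L" and L0: "0 \<in> L"
    and lV: "lattice_in V \<Lambda>" and lW: "lattice_in W \<Gamma>"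
    and id: "i \<le> DIM('a)"
    and jl: "j \<le> l" and ji: "j \<le> i" and ijl: "i - j \<le> DIM('a) - l"
    and mu0: "\<mu> \<ge> 0" and cov: "covers UNIV (direct_sum_set K L) (lattice_sum \<Lambda> \<Gamma>) i \<mu>"
  shows "covering_minimum V K \<Lambda> j + covering_minimum W L \<Gamma> (i - j) \<le> \<mu>"
proof (rule ccontr)
  define a where "a = covering_minimum V K \<Lambda> j"
  define b where "b = covering_minimum W L \<Gamma> (i - j)"
  assume "\<not> a + b \<le> \<mu>"
  then have lt: "\<mu> < a + b" unfolding a_def b_def by simp
  define \<delta> where "\<delta> = (a + b - \<mu>) / 3"
  have d0: "\<delta> > 0" unfolding \<delta>_def using lt by simp
  have KV: "K \<subseteq> V" and cvK: "convex K" using cK unfolding convex_body_in_def by auto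
  have LW: "L \<subseteq> W" and cvL: "convex L" using cL unfolding convex_body_in_def by auto
  have LamV: "\<Lambda> \<subseteq> V" using lV unfolding lattice_in_def by auto
  have GamW: "\<Gamma> \<subseteq> W" using lW unfolding lattice_in_def by auto
  have lD: "l \<le> DIM('a)" using dim_subset[of V UNIV] dV by simp
  obtain U1 where U1: "U1 \<subseteq> V" "affine U1" "U1 \<noteq> {}" "aff_dim U1 = int (dim V) - int j"
    and av1: "\<forall>\<mu>'. 0 \<le> \<mu>' \<and> \<mu>' \<le> a - \<delta> \<longrightarrow> dil_plus \<mu>' K \<Lambda> \<inter> U1 = {}"
    using avoid_lemma[OF sV cvK K0, of j "a - \<delta>" \<Lambda>] jl dV d0 unfolding a_def by auto
  obtain U2 where U2: "U2 \<subseteq> W" "affine U2" "U2 \<noteq> {}" "aff_dim U2 = int (dim W) - int (i - j)"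
    and av2: "\<forall>\<mu>'. 0 \<le> \<mu>' \<and> \<mu>' \<le> b - \<delta> \<longrightarrow> dil_plus \<mu>' L \<Gamma> \<inter> U2 = {}"
    using avoid_lemma[OF sW cvL L0, of "i - j" "b - \<delta>" \<Gamma>] ijl dW d0 unfolding b_def by auto
  obtain p1 where p1: "p1 \<in> U1" using U1 by auto
  obtain p2 where p2: "p2 \<in> U2" using U2 by auto
  define S1 where "S1 = (\<lambda>x. (-p1) + x) ` U1"
  define S2 where "S2 = (\<lambda>x. (-p2) + x) ` U2"
  have sS1: "subspace S1" unfolding S1_def by (rule affine_diffs_subspace[OF U1(2) p1])
  have sS2: "subspace S2" unfolding S2_def by (rule affine_diffs_subspace[OF U2(2) p2])
  have S1V: "S1 \<subseteq> V" unfolding S1_def using U1(1) p1 sV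
    by (auto simp flip: diff_conv_add_uminus simp add: add.commute intro: subspace_diff)
  have S2W: "S2 \<subseteq> W" unfolding S2_def using U2(1) p2 sW
    by (auto simp flip: diff_conv_add_uminus simp add: add.commute intro: subspace_diff)
  have S12: "S1 \<inter> S2 = {0}" using S1V S2W VW sS1 sS2 subspace_0 by auto
  define S where "S = {x + y | x y. x \<in> S1 \<and> y \<in> S2}"
  have sS: "subspace S" unfolding S_def using sS1 sS2 by (rule subspace_sums)
  have adS: "aff_dim S = aff_dim S1 + aff_dim S2"
    using aff_dim_sums_Int_0[of S1 S2] sS1 sS2 S12 unfolding S_def
    by (simp add: subspace_imp_affine subspace_0)
  have "aff_dim S1 = aff_dim U1" unfolding S1_def by (rule aff_dim_translation_eq)
  moreover have "aff_dim S2 = aff_dim U2" unfolding S2_def by (rule aff_dim_translation_eq)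
  ultimately have adS': "aff_dim S = int DIM('a) - int i"
    using adS U1(4) U2(4) dV dW jl ji ijl lD id by simp
  define U where "U = (\<lambda>x. (p1 + p2) + x) ` S"
  have aU: "affine U" unfolding U_def using sS by (metis affine_translation subspace_imp_affine)
  have neU: "U \<noteq> {}" unfolding U_def using sS subspace_0 by auto
  have adU: "aff_dim U = int (dim (UNIV::'a set)) - int i" unfolding U_def aff_dim_translation_eq
    using adS' by simp
  obtain z where zd: "z \<in> dil_plus \<mu> (direct_sum_set K L) (lattice_sum \<Lambda> \<Gamma>)" and zU: "z \<in> U"
    using cov aU neU adU unfolding covers_def by blast
  from zd obtain t x y a' b' where zz: "z = \<mu> *\<^sub>R (t *\<^sub>R x + (1 - t) *\<^sub>R y) + (a' + b')"
    and x: "x \<in> K" and y: "y \<in> L" and t: "0 \<le> t" "t \<le> 1" and a': "a' \<in> \<Lambda>" and b': "b' \<in> \<Gamma>"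
    unfolding dil_plus_def direct_sum_set_def lattice_sum_def by blast
  from zU obtain s1 s2 where s: "s1 \<in> S1" "s2 \<in> S2" "z = (p1 + p2) + (s1 + s2)"
    unfolding U_def S_def by auto
  define u1 where "u1 = p1 + s1"
  define u2 where "u2 = p2 + s2"
  have u1: "u1 \<in> U1" using s(1) unfolding u1_def S1_def by auto
  have u2: "u2 \<in> U2" using s(2) unfolding u2_def S2_def by auto
  define e1 where "e1 = (\<mu> * t) *\<^sub>R x + a'"
  define e2 where "e2 = (\<mu> * (1 - t)) *\<^sub>R y + b'"
  have e1V: "e1 \<in> V" unfolding e1_def using x a' KV LamV sV
    by (auto intro!: subspace_add subspace_scale)
  have e2W: "e2 \<in> W" unfolding e2_def using y b' LW GamW sW
    by (auto intro!: subspace_add subspace_scale)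
  have eq: "e1 + e2 = u1 + u2" unfolding e1_def e2_def u1_def u2_def using zz s(3)
    by (simp add: algebra_simps)
  have "e1 - u1 = u2 - e2" using eq by (simp add: algebra_simps)
  moreover have "e1 - u1 \<in> V" using e1V u1 U1(1) sV by (auto intro: subspace_diff)
  moreover have "u2 - e2 \<in> W" using e2W u2 U2(1) sW by (auto intro: subspace_diff)
  ultimately have "e1 - u1 \<in> V \<inter> W" by simp
  then have "e1 - u1 = 0" using VW by auto
  then have e1u1: "e1 = u1" and e2u2: "e2 = u2" using eq by auto
  have mt0: "\<mu> * t \<ge> 0" "\<mu> * (1 - t) \<ge> 0" using mu0 t by auto
  have sumt: "\<mu> * t + \<mu> * (1 - t) = \<mu>" by (simp add: algebra_simps)
  show False
  proof (cases "\<mu> * t \<le> a - \<delta>")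
    case True
    have "e1 \<in> dil_plus (\<mu> * t) K \<Lambda>" unfolding e1_def dil_plus_def using x a' by blast
    then show False using av1 True mt0 e1u1 u1 by blast
  next
    case False
    have "\<mu> * (1 - t) = \<mu> - \<mu> * t" by (simp add: algebra_simps)
    moreover have "3 * \<delta> = a + b - \<mu>" unfolding \<delta>_def by simp
    ultimately have "\<mu> * (1 - t) \<le> b - \<delta>" using False lt d0 by linarith
    moreover have "e2 \<in> dil_plus (\<mu> * (1 - t)) L \<Gamma>" unfolding e2_def dil_plus_def using y b' by blast
    ultimately show False using av2 mt0 e2u2 u2 by blast
  qed
qed



theorem theorem1p2:
  fixes V W K L \<Lambda> \<Gamma> :: "'a::euclidean_space set" and l i :: nat
  assumes "subspace V" and "subspace W"
    and "V \<inter> W = {0}" and "{v + w | v w. v \<in> V \<and> w \<in> W} = UNIV"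
    and "dim V = l" and "dim W = DIM('a) - l"
    and "convex_body_in V K" and "0 \<in> K"
    and "convex_body_in W L" and "0 \<in> L"
    and "lattice_in V \<Lambda>" and "lattice_in W \<Gamma>"
    and "1 \<le> i" and "i \<le> DIM('a)"
  shows "covering_minimum UNIV (direct_sum_set K L) (lattice_sum \<Lambda> \<Gamma>) i =
    Max ((\<lambda>j. covering_minimum V K \<Lambda> j + covering_minimum W L \<Gamma> (i - j)) `
           {j. j \<le> l \<and> j \<le> i \<and> i - j \<le> DIM('a) - l})"
proof -
  define f where "f = (\<lambda>j. covering_minimum V K \<Lambda> j + covering_minimum W L \<Gamma> (i - j))"
  define J where "J = {j. j \<le> l \<and> j \<le> i \<and> i - j \<le> DIM('a) - l}"
  define M where "M = Max (f ` J)"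
  define S where "S = {\<mu>. \<mu> \<ge> 0 \<and> covers UNIV (direct_sum_set K L) (lattice_sum \<Lambda> \<Gamma>) i \<mu>}"
  have i0: "i \<noteq> 0" using assms(13) by simp
  have cmeq: "covering_minimum UNIV (direct_sum_set K L) (lattice_sum \<Lambda> \<Gamma>) i = Inf S"
    unfolding S_def by (rule cm_def2[OF i0])
  have lD: "l \<le> DIM('a)" using dim_subset[of V UNIV] assms(5) by simp
  have finJ: "finite J" unfolding J_def by (rule finite_subset[of _ "{..l}"]) auto
  have "min i l \<in> J" unfolding J_def using lD assms(14) by auto
  then have neJ: "J \<noteq> {}" by auto
  have f0: "f j \<ge> 0" for j unfolding f_def
    using cm_nonneg[OF assms(1,7,11)] cm_nonneg[OF assms(2,9,12)] by (simp add: add_nonneg_nonneg)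
  have fM: "f j \<le> M" if "j \<in> J" for j unfolding M_def using finJ that by simp
  have M0: "M \<ge> 0" using fM f0 \<open>min i l \<in> J\<close> by (meson order.trans)
  have inS: "M + 2 * \<epsilon> \<in> S" if eps: "\<epsilon> > 0" for \<epsilon>
  proof -
    have "covers UNIV (direct_sum_set K L) (lattice_sum \<Lambda> \<Gamma>) i (M + 2 * \<epsilon>)"
      unfolding covers_def
    proof (intro allI impI)
      fix U :: "'a set"
      assume U: "U \<subseteq> UNIV \<and> affine U \<and> U \<noteq> {} \<and> aff_dim U = int (dim (UNIV::'a set)) - int i"
      then obtain j where j: "j \<le> l" "j \<le> i" "i - j \<le> DIM('a) - l" and
        H: "\<forall>\<mu>. \<mu> \<ge> f j + 2 * \<epsilon> \<longrightarrow>
          dil_plus \<mu> (direct_sum_set K L) (lattice_sum \<Lambda> \<Gamma>) \<inter> U \<noteq> {}"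
        using ub_lemma[OF assms eps, of U] unfolding f_def by auto
      have "j \<in> J" unfolding J_def using j by auto
      then show "dil_plus (M + 2 * \<epsilon>) (direct_sum_set K L) (lattice_sum \<Lambda> \<Gamma>) \<inter> U \<noteq> {}"
        using H fM by auto
    qed
    then show ?thesis unfolding S_def using M0 eps by simp
  qed
  have neS: "S \<noteq> {}" using inS[of 1] by auto
  have bdd: "bdd_below S" unfolding S_def by (rule bdd_belowI[of _ 0]) auto
  have le: "Inf S \<le> M"
  proof (rule field_le_epsilon)
    fix e :: real assume "e > 0"
    then have "M + 2 * (e/2) \<in> S" using inS[of "e/2"] by simp
    then show "Inf S \<le> M + e" using cInf_lower[OF _ bdd] by fastforce
  qed
  have "M \<in> f ` J" unfolding M_def using finJ neJ by simp
  then obtain j0 where j0: "j0 \<in> J" "M = f j0" by auto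
  have ge: "M \<le> Inf S"
  proof (rule cInf_greatest[OF neS])
    fix \<mu> assume "\<mu> \<in> S"
    then show "M \<le> \<mu>" unfolding j0(2) f_def S_def
      using lb_lemma[OF assms(1,2,3,5,6,7,8,9,10,11,12,14), of j0 \<mu>] j0(1) unfolding J_def by auto
  qed
  show ?thesis using le ge cmeq unfolding M_def f_def J_def by simp
qed

end
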